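(* Let $q\in(1,+\infty)$, $T>0$, $x<0$ and $v>0$ be such that $\frac{2q-1}{q-1}\frac{|x|}{v}<T$. For $\theta\in(0,T]$ and $w\in[0,v)$ let $$I(\theta,w)=\inf\Big\{\frac1q\int_0^\theta|\eta'(s)|^q ds:\ \eta\in W^{1,q}(0,\theta;\mathbb R),\ \eta(0)=v,\ \eta(\theta)=w,\ \eta\ge w \text{ on }[0,\theta],\ x+\int_0^\theta\eta(s)ds\le0\Big\}.$$ Fix $\theta\in\left(\frac{|x|}{v},\frac{2q-1}{q-1}\frac{|x|}{v}\right]$. Then the map $w\mapsto I(\theta,w)$ is decreasing on the interval $\left[0,\frac{(2q-1)|x|/\theta-(q-1)v}{q}\right]$ and increasing on the interval $\left[\frac{(2q-1)|x|/\theta-(q-1)v}{q},v\right)$. Its minimal value is $$\frac{(2q-1)^{q-1}}{q(q-1)^{q-1}}\frac{(v-|x|/\theta)^q}{\theta^{q-1}}.$$ *)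

theory Defs
  imports "HOL-Analysis.Analysis"
begin

text \<open>One-dimensional Sobolev space W^{1,q}(0,theta): eta (its continuous representative)
  is the primitive of an L^q function g on [0,theta]; g is the weak derivative of eta.\<close>
definition W1q_deriv :: "real \<Rightarrow> real \<Rightarrow> (real \<Rightarrow> real) \<Rightarrow> (real \<Rightarrow> real) \<Rightarrow> bool" where
  "W1q_deriv q \<theta> \<eta> g \<longleftrightarrow>
     g absolutely_integrable_on {0..\<theta>} \<and>
     (\<lambda>s. \<bar>g s\<bar> powr q) integrable_on {0..\<theta>} \<and>
     (\<forall>t\<in>{0..\<theta>}. \<eta> t = \<eta> 0 + integral {0..t} g)"

text \<open>The value function I(theta,w); the infimum is taken in the extended reals,
  so that it is +infinity when the admissible set is empty.\<close>
definition Ival :: "real \<Rightarrow> real \<Rightarrow> real \<Rightarrow> real \<Rightarrow> real \<Rightarrow> ereal" where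
  "Ival q x v \<theta> w = Inf {ereal ((1/q) * integral {0..\<theta>} (\<lambda>s. \<bar>g s\<bar> powr q)) | \<eta> g.
      W1q_deriv q \<theta> \<eta> g \<and> \<eta> 0 = v \<and> \<eta> \<theta> = w \<and>
      (\<forall>s\<in>{0..\<theta>}. \<eta> s \<ge> w) \<and> x + integral {0..\<theta>} \<eta> \<le> 0}"

end

theory Submission
  imports Defs
begin

lemma sigma_finite_lebesgue: "sigma_finite_measure (lebesgue :: real measure)"
proof -
  let ?A = "range (\<lambda>n::nat. {- real n..real n})"
  have "\<Union> ?A = UNIV"
  proof -
    have "\<exists>n::nat. x \<in> {-real n..real n}" for x :: real
    proof -
      obtain n :: nat where "\<bar>x\<bar> \<le> real n" using real_arch_simple by blast
      then show ?thesis by (intro exI[of _ n]) auto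
    qed
    then show ?thesis by auto
  qed
  then have "countable ?A \<and> ?A \<subseteq> sets lebesgue \<and> \<Union> ?A = space lebesgue \<and> (\<forall>a\<in>?A. emeasure lebesgue a \<noteq> \<infinity>)"
    by auto
  then show ?thesis unfolding sigma_finite_measure_def by blast
qed
lemma meas_Icc: "measure lebesgue {a..b::real} = (if a \<le> b then b - a else 0)"
  by simp

lemma fub:
  fixes h :: "real \<Rightarrow> real"
  assumes h: "h absolutely_integrable_on {0..\<theta>}" and th: "0 \<le> \<theta>"
  shows "integral {0..\<theta>} (\<lambda>t. integral {0..t} h) = integral {0..\<theta>} (\<lambda>s. (\<theta> - s) * h s)"
proof -
  interpret L: pair_sigma_finite "lebesgue::real measure" "lebesgue::real measure"
    by (simp add: pair_sigma_finite_def sigma_finite_lebesgue)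
  define H where "H s = indicator {0..\<theta>} s * h s" for s
  have Hint: "integrable lebesgue H"
    using h unfolding set_integrable_def H_def by simp
  have Hm: "H \<in> borel_measurable lebesgue" using Hint by auto
  have id_meas: "(\<lambda>x::real. x) \<in> borel_measurable lebesgue"
    by (rule measurable_completion) simp
  define f where "f s t = indicator {s..\<theta>} t * H s" for s t :: real
  have fm: "case_prod f \<in> borel_measurable (lebesgue \<Otimes>\<^sub>M lebesgue)"
  proof -
    have "case_prod f = (\<lambda>p. (if fst p \<le> snd p \<and> snd p \<le> \<theta> then 1 else 0) * H (fst p))"
      by (auto simp: fun_eq_iff indicator_def f_def)
    also have "\<dots> \<in> borel_measurable (lebesgue \<Otimes>\<^sub>M lebesgue)"
      using Hm id_meas measurable_compose[OF measurable_fst Hm] measurable_compose[OF measurable_fst id_meas] measurable_compose[OF measurable_snd id_meas]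
      by measurable
    finally show ?thesis .
  qed
  have prodabs: "(\<lambda>s. (\<theta> - s) * h s) absolutely_integrable_on {0..\<theta>}"
  proof (rule absolutely_integrable_bounded_measurable_product_real[OF _ _ _ h])
    show "(\<lambda>s. \<theta> - s) \<in> borel_measurable (lebesgue_on {0..\<theta>})" by (intro continuous_imp_measurable_on_sets_lebesgue continuous_intros) auto
    show "{0..\<theta>} \<in> sets lebesgue" by simp
    show "bounded ((\<lambda>s. \<theta> - s) ` {0..\<theta>})"
      by (intro compact_imp_bounded compact_continuous_image continuous_intros) auto
  qed
  have prodabs2: "(\<lambda>s. (\<theta> - s) * \<bar>h s\<bar>) absolutely_integrable_on {0..\<theta>}"
  proof (rule absolutely_integrable_bounded_measurable_product_real)
    show "(\<lambda>s. \<theta> - s) \<in> borel_measurable (lebesgue_on {0..\<theta>})" by (intro continuous_imp_measurable_on_sets_lebesgue continuous_intros) auto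
    show "{0..\<theta>} \<in> sets lebesgue" by simp
    show "bounded ((\<lambda>s. \<theta> - s) ` {0..\<theta>})"
      by (intro compact_imp_bounded compact_continuous_image continuous_intros) auto
    show "(\<lambda>s. \<bar>h s\<bar>) absolutely_integrable_on {0..\<theta>}"
      using absolutely_integrable_norm[OF h] by (simp add: o_def)
  qed
  have inner2: "(\<integral>t. f s t \<partial>lebesgue) = indicator {0..\<theta>} s * ((\<theta> - s) * h s)" for s
  proof -
    have "(\<integral>t. f s t \<partial>lebesgue) = measure lebesgue {s..\<theta>} * H s"
      unfolding f_def by simp
    then show ?thesis by (auto simp: H_def indicator_def)
  qed
  have inner2n: "(\<integral>t. \<bar>f s t\<bar> \<partial>lebesgue) = indicator {0..\<theta>} s * ((\<theta> - s) * \<bar>h s\<bar>)" for s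
  proof -
    have "(\<integral>t. \<bar>f s t\<bar> \<partial>lebesgue) = (\<integral>t. indicator {s..\<theta>} t * \<bar>H s\<bar> \<partial>lebesgue)"
      unfolding f_def by (simp add: abs_mult)
    also have "\<dots> = measure lebesgue {s..\<theta>} * \<bar>H s\<bar>" by simp
    finally show ?thesis by (auto simp: H_def indicator_def)
  qed
  have fint: "integrable (lebesgue \<Otimes>\<^sub>M lebesgue) (case_prod f)"
  proof (rule L.Fubini_integrable[OF fm])
    show "integrable lebesgue (\<lambda>s. \<integral>t. norm (case_prod f (s, t)) \<partial>lebesgue)"
      using prodabs2 unfolding set_integrable_def by (simp add: inner2n)
    show "AE s in lebesgue. integrable lebesgue (\<lambda>t. case_prod f (s, t))"
      unfolding f_def by (simp, intro AE_I2 disjI2 integrable_real_indicator) (auto simp: emeasure_lborel_Icc_eq)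
  qed
  have inner1: "(\<integral>s. f s t \<partial>lebesgue) = indicator {0..\<theta>} t * integral {0..t} h" for t
  proof (cases "t \<in> {0..\<theta>}")
    case True
    have "(\<lambda>s. f s t) = (\<lambda>s. indicator {0..t} s * h s)"
      using True by (auto simp: fun_eq_iff f_def H_def indicator_def)
    moreover have "set_integrable lebesgue {0..t} h"
      by (rule set_integrable_subset[OF h]) (use True in auto)
    ultimately show ?thesis using True set_lebesgue_integral_eq_integral(2)[of "{0..t}" h]
      by (simp add: set_lebesgue_integral_def)
  next
    case False
    then have "(\<lambda>s. f s t) = (\<lambda>s. 0)"
      by (auto simp: fun_eq_iff f_def H_def indicator_def)
    then show ?thesis using False by simp
  qed
  have cont: "continuous_on {0..\<theta>} (\<lambda>t. integral {0..t} h)"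
    by (rule indefinite_integral_continuous_1) (use h set_lebesgue_integral_eq_integral(1) in blast)
  have "integral {0..\<theta>} (\<lambda>t. integral {0..t} h) = (LINT t:{0..\<theta>}|lebesgue. integral {0..t} h)"
    using set_lebesgue_integral_eq_integral(2)[OF absolutely_integrable_continuous_real[OF cont]] by simp
  also have "\<dots> = (\<integral>t. (\<integral>s. f s t \<partial>lebesgue) \<partial>lebesgue)"
    by (simp add: inner1 set_lebesgue_integral_def)
  also have "\<dots> = (\<integral>s. (\<integral>t. f s t \<partial>lebesgue) \<partial>lebesgue)"
    by (rule L.Fubini_integral[OF fint])
  also have "\<dots> = (LINT s:{0..\<theta>}|lebesgue. (\<theta> - s) * h s)"
    by (simp add: inner2 set_lebesgue_integral_def)
  also have "\<dots> = integral {0..\<theta>} (\<lambda>s. (\<theta> - s) * h s)"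
    using set_lebesgue_integral_eq_integral(2)[OF prodabs] by simp
  finally show ?thesis .
qed


lemma deriv_upow:
  fixes \<theta> r s :: real
  assumes "\<theta> > 0" "s < \<theta>"
  shows "((\<lambda>s. (1 - s/\<theta>) powr r) has_real_derivative (- r/\<theta>) * (1 - s/\<theta>) powr (r - 1)) (at s)"
proof -
  have pos: "1 - s/\<theta> > 0" using assms by (simp add: field_simps)
  have "((\<lambda>s. (1 - s/\<theta>) powr r) has_real_derivative r * (1 - s/\<theta>) powr (r - 1) * (0 - 1/\<theta>)) (at s)"
  proof (rule DERIV_chain2[where f="\<lambda>z. z powr r" and g="\<lambda>s. 1 - s/\<theta>"])
    show "((\<lambda>z. z powr r) has_real_derivative r * (1 - s/\<theta>) powr (r - 1)) (at (1 - s/\<theta>))"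
      by (rule has_real_derivative_powr[OF pos])
    show "((\<lambda>s. 1 - s/\<theta>) has_real_derivative 0 - 1/\<theta>) (at s)"
      using assms by (auto intro!: derivative_eq_intros)
  qed
  then show ?thesis using assms by (simp add: field_simps)
qed

lemma powr_cont_on:
  fixes \<theta> e :: real
  assumes "\<theta> > 0" "e > 0"
  shows "continuous_on {0..\<theta>} (\<lambda>s. (1 - s/\<theta>) powr e)"
  using assms by (intro continuous_on_powr' continuous_intros) (auto simp: field_simps)


context
  fixes q x v \<theta> :: real
  assumes q: "q > 1" and x: "x < 0" and v: "v > 0"
    and th1: "-x/v < \<theta>" and th2: "\<theta> \<le> (2*q-1)/(q-1) * (-x/v)"
begin

definition mm :: real where "mm = ((2*q-1)*(-x)/\<theta> - (q-1)* v)/q"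
definition DD :: real where "DD = v - mm"
definition rr :: real where "rr = q/(q-1)"
definition es :: "real \<Rightarrow> real" where "es s = mm + DD * (1 - s/\<theta>) powr rr"
definition gs :: "real \<Rightarrow> real" where "gs s = -(DD * rr/\<theta>) * (1 - s/\<theta>) powr (rr - 1)"

lemma th_pos: "\<theta> > 0"
proof -
  have "-x/v > 0" using x v by (simp add: divide_neg_pos)
  then show ?thesis using th1 by linarith
qed

lemma P_pos: "v + x/\<theta> > 0"
proof -
  have "-x < v * \<theta>" using th1 v by (simp add: field_simps)
  then show ?thesis using th_pos by (simp add: field_simps)
qed

lemma DD_eq: "DD = (2*q-1)*(v + x/\<theta>)/q"
  unfolding DD_def mm_def using q th_pos by (simp add: field_simps)

lemma DD_pos: "DD > 0"
  unfolding DD_eq using q P_pos by simp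

lemma mm_nonneg: "mm \<ge> 0"
proof -
  have "\<theta>*((q-1)* v) \<le> (2*q-1)*(-x)"
    using th2 q v by (simp add: field_simps)
  then have "(q-1)* v \<le> (2*q-1)*(-x)/\<theta>"
    using th_pos by (simp add: field_simps)
  then show ?thesis unfolding mm_def using q by simp
qed

lemma mm_less: "mm < v" using DD_pos unfolding DD_def by simp

lemma rr_gt: "rr > 1" unfolding rr_def using q by simp
lemma rr1: "rr - 1 = 1/(q-1)" unfolding rr_def using q by (simp add: field_simps)

lemma es0: "es 0 = v" unfolding es_def DD_def by simp
lemma esth: "es \<theta> = mm" unfolding es_def using th_pos by simp
lemma es_ge: "s \<in> {0..\<theta>} \<Longrightarrow> es s \<ge> mm"
  unfolding es_def using DD_pos by simp

lemma gs_cont: "continuous_on {0..\<theta>} gs"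
  unfolding gs_def
  by (rule continuous_on_mult[OF continuous_on_const powr_cont_on[OF th_pos]]) (use rr_gt in simp)

lemma es_cont: "continuous_on {0..\<theta>} es"
  unfolding es_def
  by (rule continuous_on_add[OF continuous_on_const continuous_on_mult[OF continuous_on_const powr_cont_on[OF th_pos]]]) (use rr_gt in simp)

lemma es_deriv: "s < \<theta> \<Longrightarrow> (es has_real_derivative gs s) (at s)"
proof -
  assume s: "s < \<theta>"
  have "((\<lambda>s. mm + DD * (1 - s/\<theta>) powr rr) has_real_derivative 0 + DD * ((- rr/\<theta>) * (1 - s/\<theta>) powr (rr - 1))) (at s)"
    by (rule DERIV_add[OF DERIV_const DERIV_cmult[OF deriv_upow[OF th_pos s]]])
  then show ?thesis unfolding es_def gs_def by (simp add: fun_eq_iff mult.assoc)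
qed

lemma es_ftc: "t \<in> {0..\<theta>} \<Longrightarrow> es t = es 0 + integral {0..t} gs"
proof -
  assume t: "t \<in> {0..\<theta>}"
  have "(gs has_integral es t - es 0) {0..t}"
  proof (rule fundamental_theorem_of_calculus_interior)
    show "0 \<le> t" using t by simp
    show "continuous_on {0..t} es" using es_cont by (rule continuous_on_subset) (use t in auto)
    show "(es has_vector_derivative gs s) (at s)" if "s \<in> {0<..<t}" for s
      using es_deriv[of s] t that by (auto simp: has_real_derivative_iff_has_vector_derivative[symmetric])
  qed
  then show ?thesis by (simp add: integral_unique)
qed

lemma gsq_cont: "continuous_on {0..\<theta>} (\<lambda>s. \<bar>gs s\<bar> powr q)"
  using gs_cont q by (intro continuous_on_powr' continuous_intros) auto

lemma W_star: "W1q_deriv q \<theta> es gs"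
  unfolding W1q_deriv_def
proof (intro conjI ballI)
  show "gs absolutely_integrable_on {0..\<theta>}" by (rule absolutely_integrable_continuous_real[OF gs_cont])
  show "(\<lambda>s. \<bar>gs s\<bar> powr q) integrable_on {0..\<theta>}" by (rule integrable_continuous_real[OF gsq_cont])
  show "es t = es 0 + integral {0..t} gs" if "t \<in> {0..\<theta>}" for t using es_ftc[OF that] .
qed

lemma es_integral: "integral {0..\<theta>} es = -x"
proof -
  define F where "F s = mm * s - DD * \<theta>/(rr+1) * (1 - s/\<theta>) powr (rr+1)" for s
  have Fd: "(F has_real_derivative es s) (at s)" if "s < \<theta>" for s
  proof -
    have "((\<lambda>s. (1 - s/\<theta>) powr (rr+1)) has_real_derivative (- (rr+1)/\<theta>) * (1 - s/\<theta>) powr (rr + 1 - 1)) (at s)"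
      by (rule deriv_upow[OF th_pos that])
    then have "(F has_real_derivative mm * 1 - DD * \<theta>/(rr+1) * ((- (rr+1)/\<theta>) * (1 - s/\<theta>) powr (rr + 1 - 1))) (at s)"
      unfolding F_def by (rule DERIV_diff[OF DERIV_cmult[OF DERIV_ident] DERIV_cmult])
    then have "(F has_real_derivative mm - DD * \<theta>/(rr+1) * ((- (rr+1)/\<theta>) * (1 - s/\<theta>) powr rr)) (at s)"
      by simp
    moreover have "mm - DD * \<theta>/(rr+1) * ((- (rr+1)/\<theta>) * (1 - s/\<theta>) powr rr) = es s"
    proof -
      have "\<theta> + \<theta> * rr > 0" "rr + 1 > 0" using th_pos rr_gt by (auto intro: add_pos_pos)
      then show ?thesis unfolding es_def using th_pos by (simp add: field_simps)
    qed
    ultimately show ?thesis by simp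
  qed
  have Fc: "continuous_on {0..\<theta>} F"
    unfolding F_def
    by (rule continuous_on_diff[OF continuous_on_mult[OF continuous_on_const continuous_on_id] continuous_on_mult[OF continuous_on_const powr_cont_on[OF th_pos]]]) (use rr_gt in simp)
  have "(es has_integral F \<theta> - F 0) {0..\<theta>}"
  proof (rule fundamental_theorem_of_calculus_interior)
    show "0 \<le> \<theta>" using th_pos by simp
    show "continuous_on {0..\<theta>} F" by (rule Fc)
    show "(F has_vector_derivative es s) (at s)" if "s \<in> {0<..<\<theta>}" for s
      using Fd[of s] that by (auto simp: has_real_derivative_iff_has_vector_derivative[symmetric])
  qed
  then have "integral {0..\<theta>} es = F \<theta> - F 0" by (simp add: integral_unique)
  also have "\<dots> = mm*\<theta> + DD * \<theta>/(rr+1)" unfolding F_def using th_pos by simp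
  also have "\<dots> = -x"
    unfolding DD_eq mm_def rr_def using q th_pos by (simp add: field_simps)
  finally show ?thesis .
qed

end


lemma prod_int:
  fixes h :: "real \<Rightarrow> real"
  assumes h: "h absolutely_integrable_on {0..\<theta>}"
  shows "(\<lambda>s. (\<theta> - s) * h s) integrable_on {0..\<theta>}"
proof -
  have "(\<lambda>s. (\<theta> - s) * h s) absolutely_integrable_on {0..\<theta>}"
  proof (rule absolutely_integrable_bounded_measurable_product_real[OF _ _ _ h])
    show "(\<lambda>s. \<theta> - s) \<in> borel_measurable (lebesgue_on {0..\<theta>})"
      by (intro continuous_imp_measurable_on_sets_lebesgue continuous_intros) auto
    show "{0..\<theta>} \<in> sets lebesgue" by simp
    show "bounded ((\<lambda>s. \<theta> - s) ` {0..\<theta>})"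
      by (intro compact_imp_bounded compact_continuous_image continuous_intros) auto
  qed
  then show ?thesis using set_lebesgue_integral_eq_integral(1) by blast
qed

lemma W_g_int: "W1q_deriv q \<theta> \<eta> g \<Longrightarrow> g integrable_on {0..\<theta>}"
  unfolding W1q_deriv_def using set_lebesgue_integral_eq_integral(1) by blast

lemma W_cont:
  assumes "W1q_deriv q \<theta> \<eta> g"
  shows "continuous_on {0..\<theta>} \<eta>"
proof -
  have c: "continuous_on {0..\<theta>} (\<lambda>t. \<eta> 0 + integral {0..t} g)"
    by (intro continuous_on_add continuous_on_const indefinite_integral_continuous_1 W_g_int[OF assms])
  have eq: "\<And>t. t \<in> {0..\<theta>} \<Longrightarrow> \<eta> t = \<eta> 0 + integral {0..t} g"
    using assms unfolding W1q_deriv_def by blast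
  show ?thesis
    by (rule continuous_on_eq[OF c]) (metis eq)
qed

lemma eta_int:
  assumes W: "W1q_deriv q \<theta> \<eta> g" and th: "0 \<le> \<theta>"
  shows "integral {0..\<theta>} \<eta> = \<theta> * \<eta> 0 + integral {0..\<theta>} (\<lambda>s. (\<theta> - s) * g s)"
proof -
  have ci: "continuous_on {0..\<theta>} (\<lambda>t. integral {0..t} g)"
    by (intro indefinite_integral_continuous_1 W_g_int[OF W])
  have "integral {0..\<theta>} \<eta> = integral {0..\<theta>} (\<lambda>t. \<eta> 0 + integral {0..t} g)"
  proof (rule integral_cong)
    fix t assume "t \<in> {0..\<theta>}"
    then show "\<eta> t = \<eta> 0 + integral {0..t} g" using W unfolding W1q_deriv_def by blast
  qed
  also have "\<dots> = integral {0..\<theta>} (\<lambda>t. \<eta> 0) + integral {0..\<theta>} (\<lambda>t. integral {0..t} g)"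
    by (rule integral_add) (auto intro: integrable_continuous_real ci)
  also have "integral {0..\<theta>} (\<lambda>t. integral {0..t} g) = integral {0..\<theta>} (\<lambda>s. (\<theta> - s) * g s)"
    by (rule fub) (use W th in \<open>simp_all add: W1q_deriv_def\<close>)
  finally show ?thesis using th by simp
qed

context
  fixes q x v \<theta> :: real
  assumes q: "q > 1" and x: "x < 0" and v: "v > 0"
    and th1: "-x/v < \<theta>" and th2: "\<theta> \<le> (2*q-1)/(q-1) * (-x/v)"
begin

lemma lb:
  assumes W: "W1q_deriv q \<theta> \<eta> g" and e0: "\<eta> 0 = v" and ei: "x + integral {0..\<theta>} \<eta> \<le> 0"
  shows "integral {0..\<theta>} (\<lambda>s. \<bar>gs q x v \<theta> s\<bar> powr q) \<le> integral {0..\<theta>} (\<lambda>s. \<bar>g s\<bar> powr q)"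
    and "integral {0..\<theta>} (\<lambda>s. \<bar>gs q x v \<theta> s\<bar> powr q) = (DD q x v \<theta> * rr q / \<theta>) powr (q-1) * (v + x/\<theta>)"
proof -
  note th = th_pos[OF q x v th1 th2]
  note rr = rr_gt[OF q x v th1 th2]
  note DDp = DD_pos[OF q x v th1 th2]
  note Ws = W_star[OF q x v th1 th2]
  define c where "c = DD q x v \<theta> * rr q / \<theta>"
  have c: "c > 0" unfolding c_def using DDp rr th by simp
  define K where "K = c powr (q-1)"
  have K: "K \<ge> 0" unfolding K_def by simp
  define \<phi> where "\<phi> s = K/\<theta> * (\<theta> - s)" for s
  have gs_eq: "gs q x v \<theta> s = - c * (1 - s/\<theta>) powr (rr q - 1)" for s
    by (simp add: gs_def[OF q x v th1 th2] c_def)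
  have gs_abs: "\<bar>gs q x v \<theta> s\<bar> = c * (1 - s/\<theta>) powr (rr q - 1)" for s
    unfolding gs_eq using c by (simp add: abs_mult)
  have p1: "1 - s/\<theta> = (\<theta> - s)/\<theta>" for s using th by (simp add: field_simps)
  have p2: "\<bar>gs q x v \<theta> s\<bar> powr (q-1) = \<phi> s" if s: "s \<in> {0..\<theta>}" for s
  proof -
    have u: "1 - s/\<theta> \<ge> 0" using s th by (simp add: field_simps)
    have "\<bar>gs q x v \<theta> s\<bar> powr (q-1) = c powr (q-1) * ((1 - s/\<theta>) powr (rr q - 1)) powr (q-1)"
      unfolding gs_abs using c by (simp add: powr_mult)
    also have "((1 - s/\<theta>) powr (rr q - 1)) powr (q-1) = (1 - s/\<theta>)"
      using u rr1[OF q x v th1 th2] q by (simp add: powr_powr)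
    finally show ?thesis unfolding \<phi>_def K_def p1 by simp
  qed
  have p3: "\<phi> s powr rr q = \<bar>gs q x v \<theta> s\<bar> powr q" if s: "s \<in> {0..\<theta>}" for s
  proof -
    have "\<phi> s powr rr q = \<bar>gs q x v \<theta> s\<bar> powr ((q-1) * rr q)"
      using p2[OF s, symmetric] by (simp add: powr_powr)
    also have "(q-1) * rr q = q" unfolding rr_def[OF q x v th1 th2] using q by simp
    finally show ?thesis .
  qed
  have gs_np: "gs q x v \<theta> s \<le> 0" for s
    unfolding gs_eq using c by (simp add: mult_nonneg_nonneg)
  have p4: "- gs q x v \<theta> s * \<phi> s = \<bar>gs q x v \<theta> s\<bar> powr q" if s: "s \<in> {0..\<theta>}" for s
  proof -
    have "- gs q x v \<theta> s * \<phi> s = \<bar>gs q x v \<theta> s\<bar> * \<bar>gs q x v \<theta> s\<bar> powr (q-1)"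
      using p2[OF s] gs_np[of s] by simp
    also have "\<dots> = \<bar>gs q x v \<theta> s\<bar> powr q"
    proof (cases "gs q x v \<theta> s = 0")
      case True then show ?thesis by simp
    next
      case False
      have "\<bar>gs q x v \<theta> s\<bar> powr q = \<bar>gs q x v \<theta> s\<bar> powr (1 + (q-1))" by simp
      also have "\<dots> = \<bar>gs q x v \<theta> s\<bar> * \<bar>gs q x v \<theta> s\<bar> powr (q-1)"
        unfolding powr_add using False by simp
      finally show ?thesis by simp
    qed
    finally show ?thesis .
  qed
  have young: "- g s * \<phi> s \<le> \<bar>g s\<bar> powr q / q + \<bar>gs q x v \<theta> s\<bar> powr q / rr q" if s: "s \<in> {0..\<theta>}" for s
  proof -
    have phi0: "\<phi> s \<ge> 0" unfolding \<phi>_def using s th K by simp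
    have "- g s * \<phi> s \<le> \<bar>g s\<bar> * \<phi> s" using mult_right_mono[OF _ phi0, of "- g s" "\<bar>g s\<bar>"] by simp
    also have "\<dots> \<le> \<bar>g s\<bar> powr q / q + \<phi> s powr rr q / rr q"
      by (rule Youngs_inequality) (use q rr phi0 in \<open>auto simp: rr_def[OF q x v th1 th2] field_simps\<close>)
    finally show ?thesis using p3[OF s] by simp
  qed
  have Wg: "g absolutely_integrable_on {0..\<theta>}" "(\<lambda>s. \<bar>g s\<bar> powr q) integrable_on {0..\<theta>}"
    using W unfolding W1q_deriv_def by auto
  have Wgs: "gs q x v \<theta> absolutely_integrable_on {0..\<theta>}" "(\<lambda>s. \<bar>gs q x v \<theta> s\<bar> powr q) integrable_on {0..\<theta>}"
    using Ws unfolding W1q_deriv_def by auto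
  define J where "J = integral {0..\<theta>} (\<lambda>s. (\<theta> - s) * g s)"
  define Js where "Js = integral {0..\<theta>} (\<lambda>s. (\<theta> - s) * gs q x v \<theta> s)"
  have "integral {0..\<theta>} \<eta> = \<theta> * v + J" unfolding J_def using eta_int[OF W] th e0 by simp
  moreover have "integral {0..\<theta>} (es q x v \<theta>) = \<theta> * v + Js"
    unfolding Js_def using eta_int[OF Ws] th es0[OF q x v th1 th2] by simp
  ultimately have JJ: "J \<le> Js" and Js: "\<theta> * v + Js = -x"
    using ei es_integral[OF q x v th1 th2] by auto
  have neg_phi: "(\<lambda>s. - g s * \<phi> s) = (\<lambda>s. (- K/\<theta>) * ((\<theta> - s) * g s))" for g :: "real \<Rightarrow> real"
    unfolding \<phi>_def by (auto simp: fun_eq_iff)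
  have Is: "integral {0..\<theta>} (\<lambda>s. \<bar>gs q x v \<theta> s\<bar> powr q) = (- K/\<theta>) * Js"
  proof -
    have "integral {0..\<theta>} (\<lambda>s. \<bar>gs q x v \<theta> s\<bar> powr q) = integral {0..\<theta>} (\<lambda>s. - gs q x v \<theta> s * \<phi> s)"
      by (rule integral_cong) (use p4 in simp)
    also have "\<dots> = (- K/\<theta>) * Js" unfolding neg_phi Js_def by simp
    finally show ?thesis .
  qed
  have "(- K/\<theta>) * J = integral {0..\<theta>} (\<lambda>s. - g s * \<phi> s)"
    unfolding neg_phi J_def by simp
  also have "\<dots> \<le> integral {0..\<theta>} (\<lambda>s. \<bar>g s\<bar> powr q / q + \<bar>gs q x v \<theta> s\<bar> powr q / rr q)"
  proof (rule integral_le)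
    show "(\<lambda>s. - g s * \<phi> s) integrable_on {0..\<theta>}"
      unfolding neg_phi by (intro integrable_on_mult_right prod_int Wg)
    show "(\<lambda>s. \<bar>g s\<bar> powr q / q + \<bar>gs q x v \<theta> s\<bar> powr q / rr q) integrable_on {0..\<theta>}"
      by (intro integrable_add integrable_on_divide Wg Wgs)
  qed (use young in auto)
  also have "\<dots> = integral {0..\<theta>} (\<lambda>s. \<bar>g s\<bar> powr q) / q + integral {0..\<theta>} (\<lambda>s. \<bar>gs q x v \<theta> s\<bar> powr q) / rr q"
    using Wg Wgs by (simp add: integral_add integrable_on_divide)
  finally have ineq: "(- K/\<theta>) * J \<le> integral {0..\<theta>} (\<lambda>s. \<bar>g s\<bar> powr q) / q + integral {0..\<theta>} (\<lambda>s. \<bar>gs q x v \<theta> s\<bar> powr q) / rr q" .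
  have "(- K/\<theta>) * Js \<le> (- K/\<theta>) * J"
    using JJ K th by (simp add: divide_right_mono mult_left_mono)
  then have "integral {0..\<theta>} (\<lambda>s. \<bar>gs q x v \<theta> s\<bar> powr q) * (1 - 1/rr q) \<le> integral {0..\<theta>} (\<lambda>s. \<bar>g s\<bar> powr q) / q"
    using ineq Is by (simp add: algebra_simps)
  moreover have "1 - 1/rr q = 1/q" unfolding rr_def[OF q x v th1 th2] using q by (simp add: field_simps)
  ultimately show "integral {0..\<theta>} (\<lambda>s. \<bar>gs q x v \<theta> s\<bar> powr q) \<le> integral {0..\<theta>} (\<lambda>s. \<bar>g s\<bar> powr q)"
    using q by (simp add: field_simps)
  have "(- K/\<theta>) * Js = K * (v + x/\<theta>)"
  proof -
    have Jv: "Js = -x - \<theta> * v" using Js by simp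
    show ?thesis unfolding Jv using th by (simp add: field_simps)
  qed
  then show "integral {0..\<theta>} (\<lambda>s. \<bar>gs q x v \<theta> s\<bar> powr q) = (DD q x v \<theta> * rr q / \<theta>) powr (q-1) * (v + x/\<theta>)"
    using Is unfolding K_def c_def by simp
qed

end


lemma cvx:
  fixes a b t q :: real
  assumes t0: "0 \<le> t" and t1: "t \<le> 1" and q: "q \<ge> 1"
  shows "\<bar>(1-t)*a + t*b\<bar> powr q \<le> (1-t) * \<bar>a\<bar> powr q + t * \<bar>b\<bar> powr q"
proof -
  have "\<bar>(1-t)*a + t*b\<bar> \<le> \<bar>(1-t)*a\<bar> + \<bar>t*b\<bar>" by (rule abs_triangle_ineq)
  also have "\<bar>(1-t)*a\<bar> = (1-t)*\<bar>a\<bar>" using t1 by (simp add: abs_mult)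
  also have "\<bar>t*b\<bar> = t*\<bar>b\<bar>" using t0 by (simp add: abs_mult)
  finally have "\<bar>(1-t)*a + t*b\<bar> \<le> (1-t)*\<bar>a\<bar> + t*\<bar>b\<bar>" .
  then have "\<bar>(1-t)*a + t*b\<bar> powr q \<le> ((1-t)*\<bar>a\<bar> + t*\<bar>b\<bar>) powr q"
    using q by (intro powr_mono2) auto
  also have "\<dots> \<le> (1-t) * \<bar>a\<bar> powr q + t * \<bar>b\<bar> powr q"
  proof (cases "a = 0 \<or> b = 0")
    case False
    then have "\<bar>a\<bar> \<in> {0<..}" "\<bar>b\<bar> \<in> {0<..}" by auto
    from convex_onD[OF powr_convex[OF q] t0 t1 this] show ?thesis by simp
  next
    case True
    have pw: "s powr q \<le> s" if "0 \<le> s" "s \<le> 1" for s :: real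
      using powr_mono'[OF q that] that by simp
    show ?thesis
    proof (cases "a = 0")
      case True
      have "(t*\<bar>b\<bar>) powr q = t powr q * \<bar>b\<bar> powr q" using t0 by (simp add: powr_mult)
      also have "\<dots> \<le> t * \<bar>b\<bar> powr q" using pw[OF t0 t1] by (simp add: mult_right_mono)
      finally show ?thesis using True by simp
    next
      case False
      then have b: "b = 0" using \<open>a = 0 \<or> b = 0\<close> by simp
      have "((1-t)*\<bar>a\<bar>) powr q = (1-t) powr q * \<bar>a\<bar> powr q" using t1 by (simp add: powr_mult)
      also have "\<dots> \<le> (1-t) * \<bar>a\<bar> powr q" using pw[of "1-t"] t0 t1 by (simp add: mult_right_mono)
      finally show ?thesis using b by simp
    qed
  qed
  finally show ?thesis .
qed

definition adm :: "real \<Rightarrow> real \<Rightarrow> real \<Rightarrow> real \<Rightarrow> real \<Rightarrow> (real \<Rightarrow> real) \<Rightarrow> (real \<Rightarrow> real) \<Rightarrow> bool" where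
  "adm q x v \<theta> w \<eta> g \<longleftrightarrow> W1q_deriv q \<theta> \<eta> g \<and> \<eta> 0 = v \<and> \<eta> \<theta> = w \<and>
      (\<forall>s\<in>{0..\<theta>}. \<eta> s \<ge> w) \<and> x + integral {0..\<theta>} \<eta> \<le> 0"

definition cost :: "real \<Rightarrow> real \<Rightarrow> (real \<Rightarrow> real) \<Rightarrow> real" where
  "cost q \<theta> g = (1/q) * integral {0..\<theta>} (\<lambda>s. \<bar>g s\<bar> powr q)"

lemma Ival_alt: "Ival q x v \<theta> w = Inf {ereal (cost q \<theta> g) | \<eta> g. adm q x v \<theta> w \<eta> g}"
  unfolding Ival_def adm_def cost_def by simp

lemma comb:
  assumes q: "q > 1" and th: "\<theta> > 0"
    and A: "adm q x v \<theta> wa \<eta>a ga" and B: "adm q x v \<theta> wb \<eta>b gb"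
    and t0: "0 \<le> t" and t1: "t \<le> 1"
  shows "adm q x v \<theta> ((1-t)*wa + t*wb) (\<lambda>s. (1-t)*\<eta>a s + t*\<eta>b s) (\<lambda>s. (1-t)*ga s + t*gb s)"
    and "cost q \<theta> (\<lambda>s. (1-t)*ga s + t*gb s) \<le> (1-t) * cost q \<theta> ga + t * cost q \<theta> gb"
proof -
  have WA: "W1q_deriv q \<theta> \<eta>a ga" and WB: "W1q_deriv q \<theta> \<eta>b gb"
    using A B unfolding adm_def by auto
  have gaa: "ga absolutely_integrable_on {0..\<theta>}" and gba: "gb absolutely_integrable_on {0..\<theta>}"
    and gaq: "(\<lambda>s. \<bar>ga s\<bar> powr q) integrable_on {0..\<theta>}" and gbq: "(\<lambda>s. \<bar>gb s\<bar> powr q) integrable_on {0..\<theta>}"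
    using WA WB unfolding W1q_deriv_def by auto
  define G where "G s = (1-t)*ga s + t*gb s" for s
  have Ga: "G absolutely_integrable_on {0..\<theta>}"
    unfolding G_def by (intro set_integral_add(1) set_integrable_mult_right gaa gba)
  have Gi: "G integrable_on {0..\<theta>}" using Ga set_lebesgue_integral_eq_integral(1) by blast
  have Gm: "G \<in> borel_measurable (lebesgue_on {0..\<theta>})" by (rule integrable_imp_measurable[OF Gi])
  have bnd_int: "(\<lambda>s. (1-t) * \<bar>ga s\<bar> powr q + t * \<bar>gb s\<bar> powr q) integrable_on {0..\<theta>}"
    by (intro integrable_add integrable_on_mult_right gaq gbq)
  have Gq: "(\<lambda>s. \<bar>G s\<bar> powr q) integrable_on {0..\<theta>}"
  proof (rule measurable_bounded_by_integrable_imp_integrable[OF _ bnd_int])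
    show "(\<lambda>s. \<bar>G s\<bar> powr q) \<in> borel_measurable (lebesgue_on {0..\<theta>})"
      using Gm by measurable
    show "norm (\<bar>G s\<bar> powr q) \<le> (1-t) * \<bar>ga s\<bar> powr q + t * \<bar>gb s\<bar> powr q" for s
      unfolding G_def using cvx[OF t0 t1] q by simp
  qed simp
  have ftc: "(1-t)*\<eta>a s + t*\<eta>b s = ((1-t)*\<eta>a 0 + t*\<eta>b 0) + integral {0..s} G" if s: "s \<in> {0..\<theta>}" for s
  proof -
    have sub: "{0..s} \<subseteq> {0..\<theta>}" using s by auto
    have ia: "ga integrable_on {0..s}" by (rule integrable_on_subinterval[OF W_g_int[OF WA] sub])
    have ib: "gb integrable_on {0..s}" by (rule integrable_on_subinterval[OF W_g_int[OF WB] sub])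
    have "integral {0..s} G = (1-t) * integral {0..s} ga + t * integral {0..s} gb"
      unfolding G_def using ia ib by (simp add: integral_add integrable_on_mult_right)
    moreover have "\<eta>a s = \<eta>a 0 + integral {0..s} ga" "\<eta>b s = \<eta>b 0 + integral {0..s} gb"
      using WA WB s unfolding W1q_deriv_def by blast+
    ultimately show ?thesis by (simp add: algebra_simps)
  qed
  have W: "W1q_deriv q \<theta> (\<lambda>s. (1-t)*\<eta>a s + t*\<eta>b s) G"
    unfolding W1q_deriv_def
  proof (intro conjI ballI)
    show "G absolutely_integrable_on {0..\<theta>}" by (rule Ga)
    show "(\<lambda>s. \<bar>G s\<bar> powr q) integrable_on {0..\<theta>}" by (rule Gq)
    fix s assume "s \<in> {0..\<theta>}"
    then show "(1-t)*\<eta>a s + t*\<eta>b s = ((1-t)*\<eta>a 0 + t*\<eta>b 0) + integral {0..s} G" by (rule ftc)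
  qed
  have ea: "\<eta>a integrable_on {0..\<theta>}" by (rule integrable_continuous_real[OF W_cont[OF WA]])
  have eb: "\<eta>b integrable_on {0..\<theta>}" by (rule integrable_continuous_real[OF W_cont[OF WB]])
  have int: "integral {0..\<theta>} (\<lambda>s. (1-t)*\<eta>a s + t*\<eta>b s) = (1-t) * integral {0..\<theta>} \<eta>a + t * integral {0..\<theta>} \<eta>b"
    using ea eb by (simp add: integral_add integrable_on_mult_right)
  have xa: "x + integral {0..\<theta>} \<eta>a \<le> 0" and xb: "x + integral {0..\<theta>} \<eta>b \<le> 0"
    using A B unfolding adm_def by auto
  have "x + integral {0..\<theta>} (\<lambda>s. (1-t)*\<eta>a s + t*\<eta>b s) = (1-t) * (x + integral {0..\<theta>} \<eta>a) + t * (x + integral {0..\<theta>} \<eta>b)"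
    unfolding int by (simp add: algebra_simps)
  also have "\<dots> \<le> 0"
    using xa xb t0 t1 by (simp add: add_nonpos_nonpos mult_nonneg_nonpos)
  finally have xc: "x + integral {0..\<theta>} (\<lambda>s. (1-t)*\<eta>a s + t*\<eta>b s) \<le> 0" .
  have ge: "(1-t)*\<eta>a s + t*\<eta>b s \<ge> (1-t)*wa + t*wb" if "s \<in> {0..\<theta>}" for s
  proof -
    have "\<eta>a s \<ge> wa" "\<eta>b s \<ge> wb" using A B that unfolding adm_def by auto
    then show ?thesis using t0 t1 by (intro add_mono mult_left_mono) auto
  qed
  show "adm q x v \<theta> ((1-t)*wa + t*wb) (\<lambda>s. (1-t)*\<eta>a s + t*\<eta>b s) (\<lambda>s. (1-t)*ga s + t*gb s)"
    using W ge xc A B unfolding adm_def G_def[abs_def] by (auto simp: algebra_simps)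
  have "integral {0..\<theta>} (\<lambda>s. \<bar>G s\<bar> powr q) \<le> integral {0..\<theta>} (\<lambda>s. (1-t) * \<bar>ga s\<bar> powr q + t * \<bar>gb s\<bar> powr q)"
    by (rule integral_le[OF Gq bnd_int]) (unfold G_def, use cvx[OF t0 t1] q in simp)
  also have "\<dots> = (1-t) * integral {0..\<theta>} (\<lambda>s. \<bar>ga s\<bar> powr q) + t * integral {0..\<theta>} (\<lambda>s. \<bar>gb s\<bar> powr q)"
    using gaq gbq by (simp add: integral_add integrable_on_mult_right)
  finally have ineqG: "integral {0..\<theta>} (\<lambda>s. \<bar>G s\<bar> powr q) \<le> (1-t) * integral {0..\<theta>} (\<lambda>s. \<bar>ga s\<bar> powr q) + t * integral {0..\<theta>} (\<lambda>s. \<bar>gb s\<bar> powr q)" .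
  have "(1/q) * integral {0..\<theta>} (\<lambda>s. \<bar>G s\<bar> powr q) \<le> (1/q) * ((1-t) * integral {0..\<theta>} (\<lambda>s. \<bar>ga s\<bar> powr q) + t * integral {0..\<theta>} (\<lambda>s. \<bar>gb s\<bar> powr q))"
    using ineqG q by (intro mult_left_mono) auto
  then show "cost q \<theta> (\<lambda>s. (1-t)*ga s + t*gb s) \<le> (1-t) * cost q \<theta> ga + t * cost q \<theta> gb"
    unfolding cost_def G_def by (simp add: algebra_simps add_divide_distrib diff_divide_distrib)
qed



theorem lemma2p3:
  fixes q T x v \<theta> :: real
  assumes "q > 1" and "T > 0" and "x < 0" and "v > 0"
    and "(2*q - 1) / (q - 1) * (\<bar>x\<bar> / v) < T"
    and "\<theta> \<in> {\<bar>x\<bar> / v <.. (2*q - 1) / (q - 1) * (\<bar>x\<bar> / v)}"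
  shows "(\<forall>w1 w2. 0 \<le> w1 \<and> w1 \<le> w2 \<and> w2 \<le> ((2*q - 1) * \<bar>x\<bar> / \<theta> - (q - 1) * v) / q
            \<longrightarrow> Ival q x v \<theta> w2 \<le> Ival q x v \<theta> w1)
       \<and> (\<forall>w1 w2. ((2*q - 1) * \<bar>x\<bar> / \<theta> - (q - 1) * v) / q \<le> w1 \<and> w1 \<le> w2 \<and> w2 < v
            \<longrightarrow> Ival q x v \<theta> w1 \<le> Ival q x v \<theta> w2)
       \<and> (INF w\<in>{0..<v}. Ival q x v \<theta> w) =
           ereal ((2*q - 1) powr (q - 1) / (q * (q - 1) powr (q - 1))
                  * ((v - \<bar>x\<bar> / \<theta>) powr q / \<theta> powr (q - 1)))
       \<and> Ival q x v \<theta> (((2*q - 1) * \<bar>x\<bar> / \<theta> - (q - 1) * v) / q) =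
           ereal ((2*q - 1) powr (q - 1) / (q * (q - 1) powr (q - 1))
                  * ((v - \<bar>x\<bar> / \<theta>) powr q / \<theta> powr (q - 1)))"
proof -
  have q: "q > 1" and x: "x < 0" and v: "v > 0" using assms by auto
  have ax: "\<bar>x\<bar> = -x" using x by simp
  have th1: "-x/v < \<theta>" and th2: "\<theta> \<le> (2*q-1)/(q-1) * (-x/v)" using assms(6) ax by auto
  note th = th_pos[OF q x v th1 th2]
  define m where "m = mm q x v \<theta>"
  have m_eq: "((2*q - 1) * \<bar>x\<bar> / \<theta> - (q - 1) * v) / q = m"
    unfolding m_def mm_def[OF q x v th1 th2] ax by simp
  have m0: "m \<ge> 0" and mv: "m < v"
    unfolding m_def using mm_nonneg[OF q x v th1 th2] mm_less[OF q x v th1 th2] by auto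
  define C where "C = cost q \<theta> (gs q x v \<theta>)"
  define S where "S w = {ereal (cost q \<theta> g) | \<eta> g. adm q x v \<theta> w \<eta> g}" for w
  have IS: "Ival q x v \<theta> w = Inf (S w)" for w unfolding S_def Ival_alt ..
  have adm_star: "adm q x v \<theta> m (es q x v \<theta>) (gs q x v \<theta>)"
    unfolding adm_def m_def
    using W_star[OF q x v th1 th2] es0[OF q x v th1 th2] esth[OF q x v th1 th2]
      es_ge[OF q x v th1 th2] es_integral[OF q x v th1 th2] by auto
  have lbC: "C \<le> cost q \<theta> g" if "adm q x v \<theta> w \<eta> g" for w \<eta> g
  proof -
    have "integral {0..\<theta>} (\<lambda>s. \<bar>gs q x v \<theta> s\<bar> powr q) \<le> integral {0..\<theta>} (\<lambda>s. \<bar>g s\<bar> powr q)"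
      using lb(1)[OF q x v th1 th2] that unfolding adm_def by blast
    then show ?thesis unfolding C_def cost_def using q by (intro mult_left_mono) auto
  qed
  have lbI: "ereal C \<le> Ival q x v \<theta> w" for w
    unfolding IS S_def by (rule Inf_greatest) (auto intro: lbC)
  have Im: "Ival q x v \<theta> m = ereal C"
  proof (rule antisym)
    have "ereal C \<in> S m" unfolding S_def C_def using adm_star by blast
    then show "Ival q x v \<theta> m \<le> ereal C" unfolding IS by (rule Inf_lower)
  qed (rule lbI)
  have mono1: "Ival q x v \<theta> w2 \<le> Ival q x v \<theta> w1" if w: "w1 \<le> w2" "w2 \<le> m" for w1 w2
  proof (cases "w1 = m")
    case True then show ?thesis using w by simp
  next
    case False
    then have lt: "w1 < m" using w by simp
    show ?thesis unfolding IS[of w1]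
    proof (rule Inf_greatest)
      fix y assume "y \<in> S w1"
      then obtain \<eta> g where y: "y = ereal (cost q \<theta> g)" and A: "adm q x v \<theta> w1 \<eta> g"
        unfolding S_def by blast
      define t where "t = (w2 - w1)/(m - w1)"
      have t0: "0 \<le> t" and t1: "t \<le> 1" unfolding t_def using lt w by auto
      have e: "t * (m - w1) = w2 - w1" unfolding t_def using lt by simp
      have "(1-t)*w1 + t*m = w1 + t * (m - w1)" by (simp add: algebra_simps)
      then have wt: "(1-t)*w1 + t*m = w2" using e by simp
      note cb = comb[OF q th A adm_star t0 t1]
      have "Ival q x v \<theta> w2 \<le> ereal (cost q \<theta> (\<lambda>s. (1-t)*g s + t*gs q x v \<theta> s))"
        unfolding IS S_def using cb(1) wt by (intro Inf_lower) auto
      also have "cost q \<theta> (\<lambda>s. (1-t)*g s + t*gs q x v \<theta> s) \<le> cost q \<theta> g"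
      proof -
        have "t * C \<le> t * cost q \<theta> g" using lbC[OF A] t0 by (rule mult_left_mono)
        then show ?thesis using cb(2) unfolding C_def by (simp add: algebra_simps)
      qed
      finally show "Ival q x v \<theta> w2 \<le> y" using y by simp
    qed
  qed
  have mono2: "Ival q x v \<theta> w1 \<le> Ival q x v \<theta> w2" if w: "m \<le> w1" "w1 \<le> w2" for w1 w2
  proof (cases "w2 = m")
    case True then show ?thesis using w by simp
  next
    case False
    then have lt: "m < w2" using w by simp
    show ?thesis unfolding IS[of w2]
    proof (rule Inf_greatest)
      fix y assume "y \<in> S w2"
      then obtain \<eta> g where y: "y = ereal (cost q \<theta> g)" and A: "adm q x v \<theta> w2 \<eta> g"
        unfolding S_def by blast
      define t where "t = (w2 - w1)/(w2 - m)"
      have t0: "0 \<le> t" and t1: "t \<le> 1" unfolding t_def using lt w by auto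
      have e: "t * (w2 - m) = w2 - w1" unfolding t_def using lt by simp
      have "(1-t)*w2 + t*m = w2 - t * (w2 - m)" by (simp add: algebra_simps)
      then have wt: "(1-t)*w2 + t*m = w1" using e by simp
      note cb = comb[OF q th A adm_star t0 t1]
      have "Ival q x v \<theta> w1 \<le> ereal (cost q \<theta> (\<lambda>s. (1-t)*g s + t*gs q x v \<theta> s))"
        unfolding IS S_def using cb(1) wt by (intro Inf_lower) auto
      also have "cost q \<theta> (\<lambda>s. (1-t)*g s + t*gs q x v \<theta> s) \<le> cost q \<theta> g"
      proof -
        have "t * C \<le> t * cost q \<theta> g" using lbC[OF A] t0 by (rule mult_left_mono)
        then show ?thesis using cb(2) unfolding C_def by (simp add: algebra_simps)
      qed
      finally show "Ival q x v \<theta> w1 \<le> y" using y by simp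
    qed
  qed
  have INF: "(INF w\<in>{0..<v}. Ival q x v \<theta> w) = ereal C"
  proof (rule antisym)
    show "(INF w\<in>{0..<v}. Ival q x v \<theta> w) \<le> ereal C"
      using Im m0 mv by (metis INF_lower atLeastLessThan_iff)
    show "ereal C \<le> (INF w\<in>{0..<v}. Ival q x v \<theta> w)"
      by (rule INF_greatest) (rule lbI)
  qed
  define P where "P = v + x/\<theta>"
  have P: "P > 0" unfolding P_def by (rule P_pos[OF q x v th1 th2])
  have vP: "v - \<bar>x\<bar>/\<theta> = P" unfolding P_def ax by simp
  have Cval: "C = (1/q) * ((DD q x v \<theta> * rr q / \<theta>) powr (q-1) * P)"
    unfolding C_def cost_def P_def using lb(2)[OF q x v th1 th2 W_star[OF q x v th1 th2] es0[OF q x v th1 th2]]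
      es_integral[OF q x v th1 th2] by simp
  have DR: "DD q x v \<theta> * rr q / \<theta> = (2*q-1) * P / ((q-1) * \<theta>)"
    unfolding DD_eq[OF q x v th1 th2] rr_def[OF q x v th1 th2] P_def using q th by (simp add: field_simps)
  have pw: "((2*q-1) * P / ((q-1) * \<theta>)) powr (q-1) = (2*q-1) powr (q-1) * P powr (q-1) / ((q-1) powr (q-1) * \<theta> powr (q-1))"
    using q P th by (simp add: powr_divide powr_mult)
  have Pq: "P powr q = P powr (q-1) * P"
  proof -
    have "P powr q = P powr ((q-1) + 1)" by simp
    also have "\<dots> = P powr (q-1) * P" using P by (simp only: powr_add) simp
    finally show ?thesis .
  qed
  have Cform: "C = (2*q - 1) powr (q - 1) / (q * (q - 1) powr (q - 1)) * ((v - \<bar>x\<bar> / \<theta>) powr q / \<theta> powr (q - 1))"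
    unfolding Cval DR pw vP Pq by (simp add: field_simps)
  show ?thesis
    unfolding m_eq Im INF Cform[symmetric]
    using mono1 mono2 by blast
qed


end
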